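(* Let $(I_t)_{t\ge0}$ be a nested interval-partition with comb metric $d_I$. There exist a countable set $F$ disjoint from $[0,1]$ and a pseudo-ultrametric $\bar d_I$ on $[0,1]\cup F$ extending $d_I$ such that the backbone associated with $([0,1]\cup F,\bar d_I)$, endowed with the Lebesgue measure on $\mathscr I$ extended by zero mass on $F$, is a complete metric space.
   Context: A nested interval-partition is a càdlàg (for the Hausdorff distance between complements) map $t\mapsto I_t$, $t\ge0$, into open subsets of $(0,1)$ with $I_s\subseteq I_t$ for $s\le t$. $f_I(x)=\inf\{t\ge0:x\in I_t\}$ and $d_I(x,y)=\mathbf 1_{\{x\ne y\}}\sup_{[x\wedge y,x\vee y]}f_I$. With $(I^0_i)$ the interval components of $I_0$, $\mathscr I=\{A\cup\bigcup_{i\in M}I^0_i:A\in\mathscr B([0,1]\setminus I_0),M\subseteq\mathbb N\}$. Backbone of a space $(U,d)$ with probability measure $\mu$ (defined on a $\sigma$-field containing the open balls $B(x,t)=\{y:d(x,y)<t\}$): on $U\times\mathbb R_+$ let $d_T((x,s),(y,t))=\max(d(x,y)-\frac{s+t}2,\frac{|t-s|}2)$, $T$ the quotient by $d_T=0$, $f(x)=\inf\{t\ge0:\mu(B(x,t))>0\}$, and the backbone is $\mathcal S=\{(x,t)\in T:t\ge f(x)\}$ with the restriction of $d_T$. *)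

theory Defs
  imports "HOL-Analysis.Analysis"
begin

definition compl01 :: "real set \<Rightarrow> real set" where
  "compl01 A = {0..1} - A"

definition hdist :: "real set \<Rightarrow> real set \<Rightarrow> real" where
  "hdist A B = max (SUP a\<in>A. infdist a B) (SUP b\<in>B. infdist b A)"

text \<open>Nested interval-partition: nested open subsets of (0,1), indexed by t \<ge> 0,
  cadlag for the Hausdorff distance between complements in [0,1].\<close>
definition nested_interval_partition :: "(real \<Rightarrow> real set) \<Rightarrow> bool" where
  "nested_interval_partition I \<longleftrightarrow>
     (\<forall>t\<ge>0. open (I t) \<and> I t \<subseteq> {0<..<1}) \<and>
     (\<forall>s t. 0 \<le> s \<longrightarrow> s \<le> t \<longrightarrow> I s \<subseteq> I t) \<and>
     (\<forall>t\<ge>0. ((\<lambda>s. hdist (compl01 (I s)) (compl01 (I t))) \<longlongrightarrow> 0) (at_right t)) \<and>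
     (\<forall>t>0. \<exists>K. compact K \<and> K \<noteq> {} \<and>
        ((\<lambda>s. hdist (compl01 (I s)) K) \<longlongrightarrow> 0) (at_left t))"

text \<open>f_I(x) = inf{t \<ge> 0 : x \<in> I_t} (infimum of the empty set is \<infinity>).\<close>
definition fI :: "(real \<Rightarrow> real set) \<Rightarrow> real \<Rightarrow> ereal" where
  "fI I x = Inf {ereal t | t. t \<ge> 0 \<and> x \<in> I t}"

definition dI :: "(real \<Rightarrow> real set) \<Rightarrow> real \<Rightarrow> real \<Rightarrow> ereal" where
  "dI I x y = (if x = y then 0 else Sup (fI I ` {min x y .. max x y}))"

definition scrI :: "(real \<Rightarrow> real set) \<Rightarrow> real set set" where
  "scrI I = {A \<union> \<Union>M | A M. A \<in> sets borel \<and> A \<subseteq> {0..1} - I 0 \<and> M \<subseteq> components (I 0)}"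

definition pseudo_ultrametric_on :: "'a set \<Rightarrow> ('a \<Rightarrow> 'a \<Rightarrow> ereal) \<Rightarrow> bool" where
  "pseudo_ultrametric_on U d \<longleftrightarrow>
     (\<forall>x\<in>U. d x x = 0) \<and>
     (\<forall>x\<in>U. \<forall>y\<in>U. 0 \<le> d x y \<and> d x y = d y x) \<and>
     (\<forall>x\<in>U. \<forall>y\<in>U. \<forall>z\<in>U. d x z \<le> max (d x y) (d y z))"

definition oball :: "'a set \<Rightarrow> ('a \<Rightarrow> 'a \<Rightarrow> ereal) \<Rightarrow> 'a \<Rightarrow> real \<Rightarrow> 'a set" where
  "oball U d x t = {y \<in> U. d x y < ereal t}"

definition bb_f :: "'a set \<Rightarrow> ('a \<Rightarrow> 'a \<Rightarrow> ereal) \<Rightarrow> ('a set \<Rightarrow> ennreal) \<Rightarrow> 'a \<Rightarrow> ereal" where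
  "bb_f U d \<mu> x = Inf {ereal t | t. t \<ge> 0 \<and> \<mu> (oball U d x t) > 0}"

definition dT :: "('a \<Rightarrow> 'a \<Rightarrow> ereal) \<Rightarrow> 'a \<times> real \<Rightarrow> 'a \<times> real \<Rightarrow> ereal" where
  "dT d p q = max (d (fst p) (fst q) - ereal ((snd p + snd q) / 2))
                  (ereal (\<bar>snd q - snd p\<bar> / 2))"

text \<open>Representatives of backbone points: (x,t) with t \<ge> 0 and t \<ge> f(x).
  The backbone is the quotient of this set by d_T = 0.\<close>
definition backbone_reps :: "'a set \<Rightarrow> ('a \<Rightarrow> 'a \<Rightarrow> ereal) \<Rightarrow> ('a set \<Rightarrow> ennreal) \<Rightarrow> ('a \<times> real) set" where
  "backbone_reps U d \<mu> = {(x, t). x \<in> U \<and> t \<ge> 0 \<and> bb_f U d \<mu> x \<le> ereal t}"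

text \<open>A set S with an (extended-valued) distance D whose metric quotient (by D = 0) is
  a complete metric space: D is a pseudometric on S and every D-Cauchy sequence in S
  converges in S.\<close>
definition complete_quotient_metric :: "'b set \<Rightarrow> ('b \<Rightarrow> 'b \<Rightarrow> ereal) \<Rightarrow> bool" where
  "complete_quotient_metric S D \<longleftrightarrow>
     (\<forall>x\<in>S. D x x = 0) \<and>
     (\<forall>x\<in>S. \<forall>y\<in>S. 0 \<le> D x y \<and> D x y = D y x) \<and>
     (\<forall>x\<in>S. \<forall>y\<in>S. \<forall>z\<in>S. D x z \<le> D x y + D y z) \<and>
     (\<forall>\<sigma>. (\<forall>n. \<sigma> n \<in> S) \<and>
           (\<forall>e>0. \<exists>N. \<forall>m\<ge>N. \<forall>n\<ge>N. D (\<sigma> m) (\<sigma> n) < ereal e)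
        \<longrightarrow> (\<exists>p\<in>S. (\<lambda>n. D (\<sigma> n) p) \<longlonglongrightarrow> 0))"

end

theory Submission
  imports Defs
begin


locale comb =
  fixes f :: "real \<Rightarrow> ereal"
  assumes f_nonneg: "\<And>x. 0 \<le> f x"
begin

definition gp :: "real \<Rightarrow> ereal" where "gp a = (INF c\<in>{a<..}. SUP z\<in>{a<..<c}. f z)"
definition gm :: "real \<Rightarrow> ereal" where "gm a = (INF c\<in>{..<a}. SUP z\<in>{c<..<a}. f z)"
definition Pp where "Pp = {a\<in>{0..1}. gp a < f a}"
definition Pm where "Pm = {a\<in>{0..1}. gm a < f a}"
definition FF where "FF = (\<lambda>a. a+3) ` Pm \<union> (\<lambda>a. a+5) ` Pp"
definition UU where "UU = {0..1} \<union> FF"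
definition kr :: "real \<Rightarrow> real" where
  "kr x = (if x \<in> {0..1} then x else if x \<le> 4 then x - 3 else x - 5)"
definition ki :: "real \<Rightarrow> int" where
  "ki x = (if x \<in> {0..1} then 0 else if x \<le> 4 then -1 else 1)"
definition kle where "kle x y \<longleftrightarrow> kr x < kr y \<or> (kr x = kr y \<and> ki x \<le> ki y)"
definition g where
  "g x = (if x \<in> {0..1} then f x else if x \<le> 4 then gm (x-3) else gp (x-5))"
definition Iv where "Iv x y = {z\<in>UU. (kle x z \<and> kle z y) \<or> (kle y z \<and> kle z x)}"
definition dbar where "dbar x y = (if x = y then 0 else Sup (g ` Iv x y))"

lemma FF_disj: "FF \<inter> {0..1} = {}"
  unfolding FF_def Pm_def Pp_def by auto

lemma UU_cases:
  assumes "x \<in> UU"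
  shows "(x \<in> {0..1} \<and> kr x = x \<and> ki x = 0 \<and> g x = f x)
       \<or> (x - 3 \<in> Pm \<and> kr x = x - 3 \<and> ki x = -1 \<and> g x = gm (x - 3))
       \<or> (x - 5 \<in> Pp \<and> kr x = x - 5 \<and> ki x = 1 \<and> g x = gp (x - 5))"
  using assms unfolding UU_def FF_def kr_def ki_def g_def Pm_def Pp_def by auto

lemma key_real[simp]: "x \<in> {0..1} \<Longrightarrow> kr x = x \<and> ki x = 0 \<and> g x = f x"
  unfolding kr_def ki_def g_def by auto

lemma key_m: "a \<in> Pm \<Longrightarrow> a + 3 \<in> UU \<and> kr (a+3) = a \<and> ki (a+3) = -1 \<and> g (a+3) = gm a"
  unfolding UU_def FF_def kr_def ki_def g_def Pm_def by auto

lemma key_p: "a \<in> Pp \<Longrightarrow> a + 5 \<in> UU \<and> kr (a+5) = a \<and> ki (a+5) = 1 \<and> g (a+5) = gp a"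
  unfolding UU_def FF_def kr_def ki_def g_def Pp_def by auto

lemma key_inj: "x \<in> UU \<Longrightarrow> y \<in> UU \<Longrightarrow> kr x = kr y \<Longrightarrow> ki x = ki y \<Longrightarrow> x = y"
  using UU_cases[of x] UU_cases[of y] by auto

lemma kle_refl[simp]: "kle x x" unfolding kle_def by auto
lemma kle_trans: "kle x y \<Longrightarrow> kle y z \<Longrightarrow> kle x z" unfolding kle_def by auto
lemma kle_total: "kle x y \<or> kle y x" unfolding kle_def by auto
lemma kle_antisym: "x \<in> UU \<Longrightarrow> y \<in> UU \<Longrightarrow> kle x y \<Longrightarrow> kle y x \<Longrightarrow> x = y"
  unfolding kle_def using key_inj by force

lemma gp_nonneg: "0 \<le> gp a"
  unfolding gp_def
proof (rule INF_greatest)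
  fix c assume "c \<in> {a<..}"
  then have "(a+c)/2 \<in> {a<..<c}" by auto
  then show "0 \<le> (SUP z\<in>{a<..<c}. f z)" using f_nonneg by (meson SUP_upper2)
qed

lemma gm_nonneg: "0 \<le> gm a"
  unfolding gm_def
proof (rule INF_greatest)
  fix c assume "c \<in> {..<a}"
  then have "(a+c)/2 \<in> {c<..<a}" by auto
  then show "0 \<le> (SUP z\<in>{c<..<a}. f z)" using f_nonneg by (meson SUP_upper2)
qed

lemma g_nonneg: "x \<in> UU \<Longrightarrow> 0 \<le> g x"
  using UU_cases[of x] f_nonneg gp_nonneg gm_nonneg by auto

lemma Iv_sym: "Iv x y = Iv y x" unfolding Iv_def by auto
lemma dbar_sym: "dbar x y = dbar y x" unfolding dbar_def using Iv_sym by auto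
lemma dbar_refl[simp]: "dbar x x = 0" unfolding dbar_def by auto

lemma g_le_dbar: "x \<in> UU \<Longrightarrow> x \<noteq> y \<Longrightarrow> g x \<le> dbar x y"
proof -
  assume "x \<in> UU" "x \<noteq> y"
  then have "x \<in> Iv x y" unfolding Iv_def using kle_total[of x y] by auto
  then show ?thesis using \<open>x \<noteq> y\<close> by (auto simp: dbar_def intro!: Sup_upper)
qed

lemma dbar_nonneg: "x \<in> UU \<Longrightarrow> 0 \<le> dbar x y"
  using g_le_dbar[of x y] g_nonneg[of x] by (cases "x = y") auto

lemma Iv_sub: "Iv x z \<subseteq> Iv x y \<union> Iv y z"
  unfolding Iv_def using kle_total kle_trans by blast

lemma dbar_ultra: "x \<in> UU \<Longrightarrow> y \<in> UU \<Longrightarrow> z \<in> UU \<Longrightarrow> dbar x z \<le> max (dbar x y) (dbar y z)"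
proof -
  assume xyz: "x \<in> UU" "y \<in> UU" "z \<in> UU"
  show ?thesis
  proof (cases "x = z")
    case True then show ?thesis using dbar_nonneg xyz by (simp add: le_max_iff_disj)
  next
    case False
    show ?thesis
    proof (cases "x = y \<or> y = z")
      case True then show ?thesis using dbar_nonneg xyz by (auto simp: le_max_iff_disj)
    next
      case F2: False
      have "Sup (g ` Iv x z) \<le> Sup (g ` (Iv x y \<union> Iv y z))"
        by (rule Sup_subset_mono) (use Iv_sub in blast)
      also have "\<dots> = max (Sup (g ` Iv x y)) (Sup (g ` Iv y z))"
        by (simp add: image_Un Sup_union_distrib sup_max)
      finally show ?thesis using False F2 unfolding dbar_def by auto
    qed
  qed
qed

lemma dbar_mono:
  assumes "x \<in> UU" "v \<in> UU" "w \<in> UU" "kle x v" "kle v w"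
  shows "dbar x v \<le> dbar x w"
proof (cases "x = v")
  case True then show ?thesis using dbar_nonneg assms by simp
next
  case False
  then have "x \<noteq> w" using assms kle_antisym by blast
  have "Iv x v \<subseteq> Iv x w" unfolding Iv_def using assms kle_trans by blast
  then show ?thesis using False \<open>x \<noteq> w\<close> unfolding dbar_def by (auto intro: Sup_subset_mono)
qed

end

context comb begin
lemma kle_real: "x \<in> {0..1} \<Longrightarrow> y \<in> {0..1} \<Longrightarrow> kle x y \<longleftrightarrow> x \<le> y"
  unfolding kle_def by auto

lemma dbar_real_lt:
  assumes xy: "x \<in> {0..1}" "y \<in> {0..1}" "x < y"
  shows "dbar x y = Sup (f ` {x..y})"
proof -
  have Iv: "Iv x y = {z \<in> UU. kle x z \<and> kle z y}"
    unfolding Iv_def using xy kle_trans kle_real by (auto simp: kle_def)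
  have le: "Sup (g ` Iv x y) \<le> Sup (f ` {x..y})"
  proof (rule Sup_least)
    fix u assume "u \<in> g ` Iv x y"
    then obtain v where v: "v \<in> UU" "kle x v" "kle v y" "u = g v" using Iv by auto
    from UU_cases[OF v(1)] show "u \<le> Sup (f ` {x..y})"
    proof (elim disjE conjE)
      assume "v \<in> {0..1}" "kr v = v" "ki v = 0" "g v = f v"
      then show ?thesis using v xy by (auto simp: kle_def intro!: Sup_upper)
    next
      assume h: "v - 3 \<in> Pm" "kr v = v - 3" "ki v = -1" "g v = gm (v - 3)"
      define q where "q = v - 3"
      have q: "x < q" "q \<le> y" using v h xy unfolding kle_def q_def by auto
      have "gm q \<le> (SUP z\<in>{x<..<q}. f z)" unfolding gm_def using q by (auto intro: INF_lower)
      also have "\<dots> \<le> Sup (f ` {x..y})" using q by (auto intro!: SUP_subset_mono)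
      finally show ?thesis using h v q_def by simp
    next
      assume h: "v - 5 \<in> Pp" "kr v = v - 5" "ki v = 1" "g v = gp (v - 5)"
      define q where "q = v - 5"
      have q: "x \<le> q" "q < y" using v h xy unfolding kle_def q_def by auto
      have "gp q \<le> (SUP z\<in>{q<..<y}. f z)" unfolding gp_def using q by (auto intro: INF_lower)
      also have "\<dots> \<le> Sup (f ` {x..y})" using q by (auto intro!: SUP_subset_mono)
      finally show ?thesis using h v q_def by simp
    qed
  qed
  have ge: "Sup (f ` {x..y}) \<le> Sup (g ` Iv x y)"
  proof (rule Sup_least)
    fix u assume "u \<in> f ` {x..y}"
    then obtain z where z: "z \<in> {x..y}" "u = f z" by auto
    then have "z \<in> {0..1}" using xy by auto
    then have "z \<in> Iv x y" "g z = f z" using z xy unfolding Iv UU_def by (auto simp: kle_def)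
    then show "u \<le> Sup (g ` Iv x y)" using z by (metis Sup_upper image_eqI)
  qed
  show ?thesis using le ge xy unfolding dbar_def by auto
qed

lemma dbar_real:
  assumes "x \<in> {0..1}" "y \<in> {0..1}"
  shows "dbar x y = (if x = y then 0 else Sup (f ` {min x y..max x y}))"
proof -
  consider "x = y" | "x < y" | "y < x" by linarith
  then show ?thesis
    using dbar_real_lt[of x y] dbar_real_lt[of y x] assms dbar_sym[of x y] by cases auto
qed

lemma subsing_countable: "(\<And>a b. a \<in> S \<Longrightarrow> b \<in> S \<Longrightarrow> a = b) \<Longrightarrow> countable S"
proof (cases "S = {}")
  case False
  assume h: "\<And>a b. a \<in> S \<Longrightarrow> b \<in> S \<Longrightarrow> a = b"
  then obtain a where "a \<in> S" using False by auto
  then have "S \<subseteq> {a}" using h by auto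
  then show ?thesis by (rule countable_subset) simp
qed auto

lemma countable_Pp: "countable Pp"
proof -
  define S where "S q1 q2 = {a. a < q1 \<and> (SUP z\<in>{a<..<q1}. f z) < ereal q2 \<and> ereal q2 < f a}" for q1 q2
  have sub: "Pp \<subseteq> (\<Union>p\<in>\<rat>\<times>\<rat>. S (fst p) (snd p))"
  proof
    fix a assume "a \<in> Pp"
    then have "gp a < f a" unfolding Pp_def by auto
    then obtain r where r: "gp a < ereal r" "ereal r < f a" using ereal_dense2[of "gp a" "f a"] by blast
    then obtain c where c: "c \<in> {a<..}" "(SUP z\<in>{a<..<c}. f z) < ereal r"
      unfolding gp_def INF_less_iff by blast
    obtain q1 where q1: "q1 \<in> \<rat>" "a < q1" "q1 < c" using c Rats_dense_in_real[of a c] by auto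
    have "(SUP z\<in>{a<..<q1}. f z) \<le> (SUP z\<in>{a<..<c}. f z)" using q1 by (auto intro!: SUP_subset_mono)
    then have sr: "(SUP z\<in>{a<..<q1}. f z) < ereal r" using c by auto
    obtain r2 where r2: "(SUP z\<in>{a<..<q1}. f z) < ereal r2" "r2 < r"
      using ereal_dense2[OF sr] by auto
    obtain q2 where q2: "q2 \<in> \<rat>" "r2 < q2" "q2 < r" using r2 Rats_dense_in_real[of r2 r] by auto
    have "ereal r2 < ereal q2" "ereal q2 < ereal r" using q2 by auto
    then have "(SUP z\<in>{a<..<q1}. f z) < ereal q2" "ereal q2 < f a" using r2(1) r(2) by (meson less_trans)+
    then have "a \<in> S q1 q2" unfolding S_def using q1 by blast
    then show "a \<in> (\<Union>p\<in>\<rat>\<times>\<rat>. S (fst p) (snd p))" using q1 q2 by (intro UN_I[of "(q1,q2)"]) auto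
  qed
  have "countable (S q1 q2)" for q1 q2
  proof (rule subsing_countable)
    have *: False if "a \<in> S q1 q2" "b \<in> S q1 q2" "a < b" for a b
    proof -
      have "f b \<le> (SUP z\<in>{a<..<q1}. f z)" using that unfolding S_def by (auto intro!: SUP_upper)
      then show False using that unfolding S_def by auto
    qed
    fix a b assume "a \<in> S q1 q2" "b \<in> S q1 q2"
    then show "a = b" using *[of a b] *[of b a] by (cases a b rule: linorder_cases) auto
  qed
  then have "countable (\<Union>p\<in>\<rat>\<times>\<rat>. S (fst p) (snd p))"
    by (intro countable_UN countable_SIGMA countable_rat) auto
  then show ?thesis by (rule countable_subset[OF sub])
qed

lemma countable_Pm: "countable Pm"
proof -
  define S where "S q1 q2 = {a. q1 < a \<and> (SUP z\<in>{q1<..<a}. f z) < ereal q2 \<and> ereal q2 < f a}" for q1 q2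
  have sub: "Pm \<subseteq> (\<Union>p\<in>\<rat>\<times>\<rat>. S (fst p) (snd p))"
  proof
    fix a assume "a \<in> Pm"
    then have "gm a < f a" unfolding Pm_def by auto
    then obtain r where r: "gm a < ereal r" "ereal r < f a" using ereal_dense2[of "gm a" "f a"] by blast
    then obtain c where c: "c \<in> {..<a}" "(SUP z\<in>{c<..<a}. f z) < ereal r"
      unfolding gm_def INF_less_iff by blast
    obtain q1 where q1: "q1 \<in> \<rat>" "c < q1" "q1 < a" using c Rats_dense_in_real[of c a] by auto
    have "(SUP z\<in>{q1<..<a}. f z) \<le> (SUP z\<in>{c<..<a}. f z)" using q1 by (auto intro!: SUP_subset_mono)
    then have sr: "(SUP z\<in>{q1<..<a}. f z) < ereal r" using c by auto
    obtain r2 where r2: "(SUP z\<in>{q1<..<a}. f z) < ereal r2" "r2 < r"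
      using ereal_dense2[OF sr] by auto
    obtain q2 where q2: "q2 \<in> \<rat>" "r2 < q2" "q2 < r" using r2 Rats_dense_in_real[of r2 r] by auto
    have "ereal r2 < ereal q2" "ereal q2 < ereal r" using q2 by auto
    then have "(SUP z\<in>{q1<..<a}. f z) < ereal q2" "ereal q2 < f a" using r2(1) r(2) by (meson less_trans)+
    then have "a \<in> S q1 q2" unfolding S_def using q1 by blast
    then show "a \<in> (\<Union>p\<in>\<rat>\<times>\<rat>. S (fst p) (snd p))" using q1 q2 by (intro UN_I[of "(q1,q2)"]) auto
  qed
  have "countable (S q1 q2)" for q1 q2
  proof (rule subsing_countable)
    have *: False if "a \<in> S q1 q2" "b \<in> S q1 q2" "a < b" for a b
    proof -
      have "f a \<le> (SUP z\<in>{q1<..<b}. f z)" using that unfolding S_def by (auto intro!: SUP_upper)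
      then show False using that unfolding S_def by auto
    qed
    fix a b assume "a \<in> S q1 q2" "b \<in> S q1 q2"
    then show "a = b" using *[of a b] *[of b a] by (cases a b rule: linorder_cases) auto
  qed
  then have "countable (\<Union>p\<in>\<rat>\<times>\<rat>. S (fst p) (snd p))"
    by (intro countable_UN countable_SIGMA countable_rat) auto
  then show ?thesis by (rule countable_subset[OF sub])
qed

lemma countable_FF: "countable FF"
  unfolding FF_def using countable_Pm countable_Pp by blast

lemma ball_interval:
  assumes x: "x \<in> UU"
  shows "is_interval (oball UU dbar x r \<inter> {0..1})"
  unfolding is_interval_1
proof (intro ballI allI impI, elim conjE)
  fix a b y assume a: "a \<in> oball UU dbar x r \<inter> {0..1}" and b: "b \<in> oball UU dbar x r \<inter> {0..1}"
    and ay: "a \<le> y" and yb: "y \<le> b"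
  have y01: "y \<in> {0..1}" using a b ay yb by auto
  have UU01: "{0..1} \<subseteq> UU" unfolding UU_def by auto
  have ab: "a \<in> UU" "b \<in> UU" "y \<in> UU" using a b y01 UU01 by (auto simp: oball_def)
  have "dbar x y \<le> max (dbar x a) (dbar a y)" using dbar_ultra x ab by blast
  also have "dbar a y \<le> dbar a b"
    using dbar_mono[of a y b] ab ay yb a b y01 kle_real by auto
  also have "dbar a b \<le> max (dbar a x) (dbar x b)" using dbar_ultra x ab by blast
  finally have "dbar x y \<le> max (dbar x a) (max (dbar x a) (dbar x b))"
    by (simp add: dbar_sym max.coboundedI2 max.mono)
  also have "\<dots> < ereal r" using a b by (auto simp: oball_def)
  finally show "y \<in> oball UU dbar x r \<inter> {0..1}" using y01 ab by (auto simp: oball_def)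
qed

lemma ball_borel: "x \<in> UU \<Longrightarrow> oball UU dbar x r \<inter> {0..1} \<in> sets borel"
  using ball_interval real_interval_borel_measurable by blast

end


context comb begin

definition mu :: "real set \<Rightarrow> ennreal" where "mu B = emeasure lborel (B \<inter> {0..1})"

lemma UU01: "{0..1} \<subseteq> UU" unfolding UU_def by auto

lemma oball_mono: "r \<le> r' \<Longrightarrow> oball UU dbar x r \<subseteq> oball UU dbar x r'"
  unfolding oball_def by (auto intro: less_le_trans)

lemma mu_mono: "x \<in> UU \<Longrightarrow> A \<subseteq> oball UU dbar x r \<Longrightarrow> mu A \<le> mu (oball UU dbar x r)"
  unfolding mu_def by (rule emeasure_mono) (auto simp: ball_borel)

lemma posball:
  assumes x: "x \<in> UU" and bb: "bb_f UU dbar mu x < ereal r"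
  shows "0 < mu (oball UU dbar x r)"
proof -
  from bb obtain r' where r': "r' \<ge> 0" "0 < mu (oball UU dbar x r')" "ereal r' < ereal r"
    unfolding bb_f_def Inf_less_iff by blast
  have "mu (oball UU dbar x r') \<le> mu (oball UU dbar x r)"
    using r' x by (intro mu_mono oball_mono) auto
  then show ?thesis using r' by auto
qed

lemma pos_nonempty: "0 < mu B \<Longrightarrow> \<exists>z. z \<in> B \<inter> {0..1}"
  unfolding mu_def by (cases "B \<inter> {0..1} = {}") auto

lemma Iv_le: "kle y w \<Longrightarrow> v \<in> Iv y w \<Longrightarrow> kle y v \<and> kle v w"
  unfolding Iv_def using kle_trans by blast

end



locale cseq = comb +
  fixes x :: "nat \<Rightarrow> real" and s :: "nat \<Rightarrow> real" and t :: real
  assumes xU: "\<And>n. x n \<in> UU" and bbx: "\<And>n. bb_f UU dbar mu (x n) \<le> ereal (s n)"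
  and st: "s \<longlonglongrightarrow> t"
  and dcau: "\<And>e. e > 0 \<Longrightarrow> \<exists>N. \<forall>m\<ge>N. \<forall>n\<ge>N. dbar (x m) (x n) < ereal (t + e)"
  and t_nonneg: "0 \<le> t"
begin

definition J where "J e = {z \<in> UU. \<exists>N. \<forall>n\<ge>N. dbar (x n) z < ereal (t + e)}"

lemma J_UU: "z \<in> J e \<Longrightarrow> z \<in> UU" unfolding J_def by auto

lemma J1: assumes "z \<in> J e" "w \<in> J e" shows "dbar z w < ereal (t + e)"
proof -
  obtain N1 where N1: "\<forall>n\<ge>N1. dbar (x n) z < ereal (t + e)" using assms unfolding J_def by auto
  obtain N2 where N2: "\<forall>n\<ge>N2. dbar (x n) w < ereal (t + e)" using assms unfolding J_def by auto
  define n where "n = max N1 N2"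
  have "dbar z w \<le> max (dbar z (x n)) (dbar (x n) w)" using dbar_ultra assms J_UU xU by blast
  also have "\<dots> < ereal (t + e)" using N1 N2 n_def dbar_sym[of z "x n"] by auto
  finally show ?thesis .
qed

lemma Jx: assumes "e > 0" shows "\<exists>N. \<forall>n\<ge>N. x n \<in> J e"
proof -
  obtain N where N: "\<forall>m\<ge>N. \<forall>n\<ge>N. dbar (x m) (x n) < ereal (t + e)" using dcau assms by blast
  then show ?thesis unfolding J_def using xU by blast
qed

lemma Jconv:
  assumes "z \<in> J e" "w \<in> J e" "v \<in> UU" "kle z v" "kle v w"
  shows "v \<in> J e"
proof -
  obtain N1 where N1: "\<forall>n\<ge>N1. dbar (x n) z < ereal (t + e)" using assms unfolding J_def by auto
  have zv: "dbar z v < ereal (t + e)"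
    using dbar_mono[of z v w] assms J_UU J1[of z e w] by (meson le_less_trans)
  have "\<forall>n\<ge>N1. dbar (x n) v < ereal (t + e)"
  proof (intro allI impI)
    fix n assume "n \<ge> N1"
    have "dbar (x n) v \<le> max (dbar (x n) z) (dbar z v)" using dbar_ultra assms J_UU xU by blast
    also have "\<dots> < ereal (t + e)" using N1 \<open>n \<ge> N1\<close> zv by auto
    finally show "dbar (x n) v < ereal (t + e)" .
  qed
  then show ?thesis unfolding J_def using assms by auto
qed

lemma Jmono: "e \<le> e' \<Longrightarrow> J e \<subseteq> J e'"
  unfolding J_def by (force intro: less_le_trans)

lemma s_near: "e > 0 \<Longrightarrow> \<exists>N. \<forall>n\<ge>N. \<bar>s n - t\<bar> < e"
  using LIMSEQ_D[OF st] by (simp add: real_norm_def)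

lemma Jreal: assumes "e > 0" shows "\<exists>z\<in>{0..1}. z \<in> J e"
proof -
  obtain N1 where N1: "\<forall>n\<ge>N1. x n \<in> J (e/2)" using Jx[of "e/2"] assms by auto
  obtain N2 where N2: "\<forall>n\<ge>N2. \<bar>s n - t\<bar> < e/2" using s_near[of "e/2"] assms by auto
  define n where "n = max N1 N2"
  have xn: "x n \<in> J (e/2)" using N1 n_def by auto
  have "\<bar>s n - t\<bar> < e/2" using N2 n_def by auto
  then have "s n < t + e/2" by linarith
  then have "ereal (s n) < ereal (t + e/2)" by simp
  then have "bb_f UU dbar mu (x n) < ereal (t + e/2)" by (rule le_less_trans[OF bbx])
  then have "0 < mu (oball UU dbar (x n) (t + e/2))" using posball xU by blast
  then obtain z where z: "z \<in> oball UU dbar (x n) (t + e/2)" "z \<in> {0..1}" using pos_nonempty by blast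
  obtain N3 where N3: "\<forall>m\<ge>N3. dbar (x m) (x n) < ereal (t + e/2)" using xn unfolding J_def by auto
  have "\<forall>m\<ge>N3. dbar (x m) z < ereal (t + e)"
  proof (intro allI impI)
    fix m assume "m \<ge> N3"
    have "dbar (x m) z \<le> max (dbar (x m) (x n)) (dbar (x n) z)" using dbar_ultra xU z UU01 by blast
    also have "\<dots> < ereal (t + e/2)" using N3 \<open>m \<ge> N3\<close> z by (auto simp: oball_def)
    also have "\<dots> \<le> ereal (t + e)" using assms by simp
    finally show "dbar (x m) z < ereal (t + e)" .
  qed
  then have "z \<in> J e" unfolding J_def using z UU01 by auto
  then show ?thesis using z by blast
qed

end

context cseq begin

definition R where "R e = J e \<inter> {0..1}"
definition lo where "lo e = Inf (R e)"
definition aa where "aa = (SUP e\<in>{0<..}. lo e)"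
definition LL where "LL = {p \<in> UU. \<forall>e>0. p \<in> J e}"

lemma R_ne: "e > 0 \<Longrightarrow> R e \<noteq> {}" using Jreal unfolding R_def by auto
lemma R_bdd: "bdd_below (R e)" unfolding R_def by (auto intro: bdd_belowI[of _ 0])
lemma lo_le: "z \<in> R e \<Longrightarrow> lo e \<le> z" unfolding lo_def by (rule cInf_lower[OF _ R_bdd])
lemma R01: "z \<in> R e \<Longrightarrow> z \<in> {0..1} \<and> z \<in> J e" unfolding R_def by auto

lemma lo_bounds: assumes "e > 0" shows "0 \<le> lo e \<and> lo e \<le> 1"
proof -
  obtain z where z: "z \<in> R e" using R_ne[OF assms] by auto
  have "lo e \<le> 1" using lo_le[OF z] R01[OF z] by auto
  moreover have "0 \<le> lo e" unfolding lo_def using R_ne[OF assms] by (rule cInf_greatest) (auto simp: R_def)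
  ultimately show ?thesis by auto
qed

lemma lo_mono: "0 < e \<Longrightarrow> e \<le> e' \<Longrightarrow> lo e' \<le> lo e"
  unfolding lo_def by (rule cInf_superset_mono) (use R_ne R_bdd Jmono in \<open>auto simp: R_def\<close>)

lemma aa_bdd: "bdd_above (lo ` {0<..})"
  using lo_bounds by (auto intro: bdd_aboveI2[of _ _ 1])

lemma lo_le_aa: "e > 0 \<Longrightarrow> lo e \<le> aa"
  unfolding aa_def using aa_bdd by (intro cSUP_upper) auto

lemma aa01: "0 \<le> aa \<and> aa \<le> 1"
proof -
  have "aa \<le> 1" unfolding aa_def by (rule cSUP_least) (use lo_bounds in auto)
  moreover have "0 \<le> aa" using lo_le_aa[of 1] lo_bounds[of 1] by auto
  ultimately show ?thesis by auto
qed

lemma aa_approx: "c < aa \<Longrightarrow> \<exists>e>0. c < lo e"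
  unfolding aa_def using aa_bdd by (subst (asm) less_cSUP_iff) auto

lemma S1:
  assumes e0: "e0 > 0" "aa \<notin> J e0" and side: "\<forall>w\<in>J e0. \<not> kle w aa"
  shows "\<exists>p. p \<in> LL"
proof -
  have a01: "aa \<in> {0..1}" using aa01 by auto
  have aU: "aa \<in> UU" using a01 UU01 by auto
  have side': "\<not> kle w aa" if "w \<in> J e" "e \<le> e0" for w e using side Jmono that by blast
  have core: "g v < ereal (t+e)" if "0<e" "e \<le> e0" "v \<in> UU" "aa < kr v" "w \<in> J e" "kle v w" for e v w
  proof -
    have "lo e < kr v" using lo_le_aa[OF \<open>0<e\<close>] \<open>aa < kr v\<close> by linarith
    then obtain z where z: "z \<in> R e" "z < kr v"
      unfolding lo_def using R_ne[OF \<open>0<e\<close>] R_bdd by (auto simp: cInf_less_iff)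
    have z01: "z \<in> {0..1}" "z \<in> J e" using R01[OF z(1)] by auto
    have "kle z v" using z z01 unfolding kle_def by simp
    have vJ: "v \<in> J e" using Jconv[OF z01(2) \<open>w \<in> J e\<close> \<open>v\<in>UU\<close> \<open>kle z v\<close> \<open>kle v w\<close>] .
    have "v \<noteq> z" using z z01 by auto
    then have "g v \<le> dbar v z" using g_le_dbar that by auto
    also have "\<dots> < ereal (t+e)" using J1 vJ z01 by blast
    finally show ?thesis .
  qed
  have gpb: "gp aa \<le> ereal (t+e)" if "0<e" "e \<le> e0" for e
  proof -
    obtain z where z: "z \<in> R e" using R_ne[OF \<open>0<e\<close>] by auto
    have z01: "z \<in> {0..1}" "z \<in> J e" using R01[OF z] by auto
    have "\<not> kle z aa" using side' z01 that by blast
    then have "aa < z" using z01 a01 unfolding kle_def by auto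
    have "gp aa \<le> (SUP y\<in>{aa<..<z}. f y)" unfolding gp_def using \<open>aa<z\<close> by (auto intro: INF_lower)
    also have "\<dots> \<le> ereal (t+e)"
    proof (rule SUP_least)
      fix y assume y: "y \<in> {aa<..<z}"
      then have y01: "y \<in> {0..1}" using a01 z01 by auto
      have yU: "y \<in> UU" using y01 UU01 by auto
      have "kle y z" using y y01 z01 unfolding kle_def by auto
      then have "g y < ereal (t+e)"
        using core[OF that(1,2) yU _ z01(2)] y y01 by auto
      then show "f y \<le> ereal (t+e)" using y01 by auto
    qed
    finally show ?thesis .
  qed
  have gbound: "v = aa \<or> (v = aa + 5 \<and> aa \<in> Pp) \<or> g v < ereal (t+e)"
     if "0<e" "e \<le> e0" "w \<in> J e" "v \<in> UU" "kle aa v" "kle v w" for e v w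
  proof (cases "aa < kr v")
    case True then show ?thesis using core that by blast
  next
    case False
    then have kv: "kr v = aa" "0 \<le> ki v" using that(5) a01 unfolding kle_def by auto
    from UU_cases[OF \<open>v\<in>UU\<close>] show ?thesis using kv by auto
  qed
  have aPp: "aa \<in> Pp"
  proof (rule ccontr)
    assume nP: "aa \<notin> Pp"
    then have fa: "f aa \<le> gp aa" using a01 unfolding Pp_def by auto
    have db: "dbar w aa \<le> ereal (t + e)" if "0<e" "e \<le> e0" "w \<in> J e" for e w
    proof -
      have "w \<noteq> aa" using that e0(2) Jmono by blast
      have "kle aa w" using side' that kle_total by blast
      have "Sup (g ` Iv aa w) \<le> ereal (t+e)"
      proof (rule Sup_least)
        fix u assume "u \<in> g ` Iv aa w"
        then obtain v where v: "v \<in> Iv aa w" "u = g v" by auto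
        have kv: "kle aa v" "kle v w" using Iv_le[OF \<open>kle aa w\<close> v(1)] by auto
        have "v \<in> UU" using v unfolding Iv_def by auto
        then have "v = aa \<or> g v < ereal (t+e)" using gbound[OF that(1,2,3) _ kv] nP by blast
        then show "u \<le> ereal (t+e)" using v fa gpb[OF that(1,2)] a01 by auto
      qed
      then show ?thesis using \<open>w \<noteq> aa\<close> unfolding dbar_def by (auto simp: Iv_sym)
    qed
    have "e0/2 > 0" using e0 by auto
    then obtain N where N: "\<forall>n\<ge>N. x n \<in> J (e0/2)" using Jx by blast
    have "\<forall>n\<ge>N. dbar (x n) aa < ereal (t + e0)"
    proof (intro allI impI)
      fix n assume "n \<ge> N"
      have "dbar (x n) aa \<le> ereal (t + e0/2)" using db[of "e0/2" "x n"] N \<open>n \<ge> N\<close> e0 by auto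
      also have "\<dots> < ereal (t + e0)" using e0 by simp
      finally show "dbar (x n) aa < ereal (t + e0)" .
    qed
    then have "aa \<in> J e0" unfolding J_def using aU by auto
    then show False using e0 by auto
  qed
  have pU: "aa + 5 \<in> UU" "kr (aa+5) = aa" "ki (aa+5) = 1" "g (aa+5) = gp aa" using key_p[OF aPp] by auto
  have "aa + 5 \<in> LL"
    unfolding LL_def
  proof (intro CollectI conjI allI impI)
    show "aa+5 \<in> UU" by (rule pU(1))
    fix e' :: real assume "e' > 0"
    define e where "e = min e' e0 / 2"
    have e: "0 < e" "e \<le> e0" "e < e'" using \<open>e'>0\<close> e0 by (auto simp: e_def)
    obtain N where N: "\<forall>n\<ge>N. x n \<in> J e" using Jx e(1) by blast
    have db: "dbar (x n) (aa+5) \<le> ereal (t + e)" if "n \<ge> N" for n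
    proof (cases "x n = aa + 5")
      case True then show ?thesis using t_nonneg e by simp
    next
      case False
      have xJ: "x n \<in> J e" using N that by auto
      have "\<not> kle (x n) aa" using side' xJ e by blast
      then have kx: "kle (aa+5) (x n)" using pU key_real[OF a01] unfolding kle_def by auto
      have "Sup (g ` Iv (aa+5) (x n)) \<le> ereal (t+e)"
      proof (rule Sup_least)
        fix u assume "u \<in> g ` Iv (aa+5) (x n)"
        then obtain v where v: "v \<in> Iv (aa+5) (x n)" "u = g v" by auto
        have kv: "kle (aa+5) v" "kle v (x n)" using Iv_le[OF kx v(1)] by auto
        have vU: "v \<in> UU" using v unfolding Iv_def by auto
        have "kle aa v" using kv(1) pU a01 unfolding kle_def by auto
        then have "v = aa \<or> (v = aa + 5 \<and> aa \<in> Pp) \<or> g v < ereal (t+e)"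
          using gbound[OF e(1,2) xJ vU] kv(2) by blast
        moreover have "v \<noteq> aa" using kv(1) pU a01 unfolding kle_def by auto
        ultimately show "u \<le> ereal (t+e)" using v pU gpb[OF e(1,2)] by auto
      qed
      moreover have "dbar (x n) (aa+5) = Sup (g ` Iv (aa+5) (x n))"
        using False by (simp add: dbar_def Iv_sym)
      ultimately show ?thesis by simp
    qed
    have "\<forall>n\<ge>N. dbar (x n) (aa+5) < ereal (t + e')"
    proof (intro allI impI)
      fix n assume "n \<ge> N"
      have "dbar (x n) (aa+5) \<le> ereal (t + e)" using db \<open>n \<ge> N\<close> by blast
      also have "\<dots> < ereal (t + e')" using e by simp
      finally show "dbar (x n) (aa+5) < ereal (t + e')" .
    qed
    then show "aa + 5 \<in> J e'" unfolding J_def using pU(1) by auto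
  qed
  then show ?thesis by blast
qed

end

context cseq begin

lemma S2:
  assumes e0: "e0 > 0" "aa \<notin> J e0" and side0: "\<exists>w\<in>J e0. kle w aa"
  shows "\<exists>p. p \<in> LL"
proof -
  have a01: "aa \<in> {0..1}" using aa01 by auto
  have aU: "aa \<in> UU" using a01 UU01 by auto
  have ka: "kr aa = aa" "ki aa = 0" using key_real[OF a01] by auto
  have side: "kle w aa \<and> w \<noteq> aa" if "w \<in> J e0" for w
  proof -
    obtain w0 where w0: "w0 \<in> J e0" "kle w0 aa" using side0 by blast
    have "kle w aa"
    proof (rule ccontr)
      assume "\<not> kle w aa"
      then have "kle aa w" using kle_total by blast
      then have "aa \<in> J e0" using Jconv[OF w0(1) that aU w0(2)] by blast
      then show False using e0 by blast
    qed
    moreover have "w \<noteq> aa" using that e0 by blast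
    ultimately show ?thesis by blast
  qed
  have side': "kle w aa \<and> w \<noteq> aa" if "w \<in> J e" "e \<le> e0" for w e using side Jmono that by blast
  have approx: "\<exists>z\<in>R e. c < z" if h: "0 < e" "c < aa" for e c
  proof -
    obtain e1 where e1: "e1 > 0" "c < lo e1" using aa_approx[OF h(2)] by blast
    define e2 where "e2 = min e e1"
    have e2: "0 < e2" "e2 \<le> e1" "e2 \<le> e" using e1 h by (auto simp: e2_def)
    obtain z where z: "z \<in> R e2" using R_ne[OF e2(1)] by auto
    have "lo e1 \<le> lo e2" using lo_mono[OF e2(1,2)] .
    then have "c < z" using lo_le[OF z] e1 by linarith
    moreover have "z \<in> R e" using z Jmono[OF e2(3)] unfolding R_def by auto
    ultimately show ?thesis by blast
  qed
  have core: "g v < ereal (t+e)" if h: "0<e" "e \<le> e0" "v \<in> UU" "kr v < aa" "w \<in> J e" "kle w v" for e v w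
  proof -
    obtain z where z: "z \<in> R e" "kr v < z" using approx[OF h(1,4)] by blast
    have z01: "z \<in> {0..1}" "z \<in> J e" using R01[OF z(1)] by auto
    have "kle v z" using z z01 unfolding kle_def by simp
    have vJ: "v \<in> J e" using Jconv[OF \<open>w \<in> J e\<close> z01(2) \<open>v\<in>UU\<close> \<open>kle w v\<close> \<open>kle v z\<close>] .
    have "v \<noteq> z" using z z01 by auto
    then have "g v \<le> dbar v z" using g_le_dbar that by auto
    also have "\<dots> < ereal (t+e)" using J1 vJ z01 by blast
    finally show ?thesis .
  qed
  have gmb: "gm aa \<le> ereal (t+e)" if "0<e" "e \<le> e0" for e
  proof -
    obtain z where z: "z \<in> R e" using R_ne[OF \<open>0<e\<close>] by auto
    have z01: "z \<in> {0..1}" "z \<in> J e" using R01[OF z] by auto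
    have "kle z aa" "z \<noteq> aa" using side' z01 that by blast+
    then have "z < aa" using z01 a01 unfolding kle_def by auto
    have "gm aa \<le> (SUP y\<in>{z<..<aa}. f y)" unfolding gm_def using \<open>z<aa\<close> by (auto intro: INF_lower)
    also have "\<dots> \<le> ereal (t+e)"
    proof (rule SUP_least)
      fix y assume y: "y \<in> {z<..<aa}"
      then have y01: "y \<in> {0..1}" using a01 z01 by auto
      have yU: "y \<in> UU" using y01 UU01 by auto
      have "kle z y" using y y01 z01 unfolding kle_def by auto
      then have "g y < ereal (t+e)"
        using core[OF that(1,2) yU _ z01(2)] y y01 by auto
      then show "f y \<le> ereal (t+e)" using y01 by auto
    qed
    finally show ?thesis .
  qed
  have gbound: "v = aa \<or> (v = aa + 3 \<and> aa \<in> Pm) \<or> g v < ereal (t+e)"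
     if "0<e" "e \<le> e0" "w \<in> J e" "v \<in> UU" "kle v aa" "kle w v" for e v w
  proof (cases "kr v < aa")
    case True then show ?thesis using core that by blast
  next
    case False
    then have kv: "kr v = aa" "ki v \<le> 0" using that(5) ka unfolding kle_def by auto
    from UU_cases[OF \<open>v\<in>UU\<close>] show ?thesis using kv by auto
  qed
  have aPm: "aa \<in> Pm"
  proof (rule ccontr)
    assume nP: "aa \<notin> Pm"
    then have fa: "f aa \<le> gm aa" using a01 unfolding Pm_def by auto
    have db: "dbar w aa \<le> ereal (t + e)" if "0<e" "e \<le> e0" "w \<in> J e" for e w
    proof -
      have "w \<noteq> aa" "kle w aa" using side' that by blast+
      have "Sup (g ` Iv w aa) \<le> ereal (t+e)"
      proof (rule Sup_least)
        fix u assume "u \<in> g ` Iv w aa"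
        then obtain v where v: "v \<in> Iv w aa" "u = g v" by auto
        have kv: "kle w v" "kle v aa" using Iv_le[OF \<open>kle w aa\<close> v(1)] by auto
        have "v \<in> UU" using v unfolding Iv_def by auto
        then have "v = aa \<or> g v < ereal (t+e)" using gbound[OF that(1,2,3) _ kv(2,1)] nP by blast
        then show "u \<le> ereal (t+e)" using v fa gmb[OF that(1,2)] a01 by auto
      qed
      then show ?thesis using \<open>w \<noteq> aa\<close> unfolding dbar_def by auto
    qed
    have "e0/2 > 0" using e0 by auto
    then obtain N where N: "\<forall>n\<ge>N. x n \<in> J (e0/2)" using Jx by blast
    have "\<forall>n\<ge>N. dbar (x n) aa < ereal (t + e0)"
    proof (intro allI impI)
      fix n assume "n \<ge> N"
      have "dbar (x n) aa \<le> ereal (t + e0/2)" using db[of "e0/2" "x n"] N \<open>n \<ge> N\<close> e0 by auto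
      also have "\<dots> < ereal (t + e0)" using e0 by simp
      finally show "dbar (x n) aa < ereal (t + e0)" .
    qed
    then have "aa \<in> J e0" unfolding J_def using aU by auto
    then show False using e0 by auto
  qed
  have pU: "aa + 3 \<in> UU" "kr (aa+3) = aa" "ki (aa+3) = -1" "g (aa+3) = gm aa" using key_m[OF aPm] by auto
  have "aa + 3 \<in> LL"
    unfolding LL_def
  proof (intro CollectI conjI allI impI)
    show "aa+3 \<in> UU" by (rule pU(1))
    fix e' :: real assume "e' > 0"
    define e where "e = min e' e0 / 2"
    have e: "0 < e" "e \<le> e0" "e < e'" using \<open>e'>0\<close> e0 by (auto simp: e_def)
    obtain N where N: "\<forall>n\<ge>N. x n \<in> J e" using Jx e(1) by blast
    have db: "dbar (x n) (aa+3) \<le> ereal (t + e)" if "n \<ge> N" for n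
    proof (cases "x n = aa + 3")
      case True then show ?thesis using t_nonneg e by simp
    next
      case False
      have xJ: "x n \<in> J e" using N that by auto
      have xa: "kle (x n) aa" "x n \<noteq> aa" using side' xJ e by blast+
      have "\<not> (kr (x n) = aa \<and> ki (x n) = 0)"
        using xa key_inj[of "x n" aa] xU aU ka by auto
      then have kx: "kle (x n) (aa+3)" using xa pU ka unfolding kle_def by auto
      have "Sup (g ` Iv (x n) (aa+3)) \<le> ereal (t+e)"
      proof (rule Sup_least)
        fix u assume "u \<in> g ` Iv (x n) (aa+3)"
        then obtain v where v: "v \<in> Iv (x n) (aa+3)" "u = g v" by auto
        have kv: "kle (x n) v" "kle v (aa+3)" using Iv_le[OF kx v(1)] by auto
        have vU: "v \<in> UU" using v unfolding Iv_def by auto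
        have "kle v aa" using kv(2) pU ka unfolding kle_def by auto
        then have "v = aa \<or> (v = aa + 3 \<and> aa \<in> Pm) \<or> g v < ereal (t+e)"
          using gbound[OF e(1,2) xJ vU] kv(1) by blast
        moreover have "v \<noteq> aa" using kv(2) pU ka unfolding kle_def by auto
        ultimately show "u \<le> ereal (t+e)" using v pU gmb[OF e(1,2)] by auto
      qed
      moreover have "dbar (x n) (aa+3) = Sup (g ` Iv (x n) (aa+3))"
        using False by (simp add: dbar_def)
      ultimately show ?thesis by simp
    qed
    have "\<forall>n\<ge>N. dbar (x n) (aa+3) < ereal (t + e')"
    proof (intro allI impI)
      fix n assume "n \<ge> N"
      have "dbar (x n) (aa+3) \<le> ereal (t + e)" using db \<open>n \<ge> N\<close> by blast
      also have "\<dots> < ereal (t + e')" using e by simp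
      finally show "dbar (x n) (aa+3) < ereal (t + e')" .
    qed
    then show "aa + 3 \<in> J e'" unfolding J_def using pU(1) by auto
  qed
  then show ?thesis by blast
qed

lemma LL_ne: "\<exists>p. p \<in> LL"
proof (cases "aa \<in> LL")
  case True then show ?thesis by blast
next
  case False
  have "aa \<in> UU" using aa01 UU01 by auto
  then obtain e0 where e0: "e0 > 0" "aa \<notin> J e0" using False unfolding LL_def by auto
  show ?thesis
  proof (cases "\<exists>w\<in>J e0. kle w aa")
    case True then show ?thesis using S2 e0 by blast
  next
    case False then show ?thesis using S1 e0 by blast
  qed
qed

lemma limit_exists:
  "\<exists>p\<in>UU. bb_f UU dbar mu p \<le> ereal t \<and> (\<forall>e>0. \<exists>N. \<forall>n\<ge>N. dbar (x n) p < ereal (t+e))"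
proof -
  obtain p where p: "p \<in> LL" using LL_ne by blast
  have pU: "p \<in> UU" and pJ: "\<And>e. e > 0 \<Longrightarrow> p \<in> J e" using p unfolding LL_def by auto
  have conv: "\<forall>e>0. \<exists>N. \<forall>n\<ge>N. dbar (x n) p < ereal (t+e)" using pJ unfolding J_def by blast
  have bb: "bb_f UU dbar mu p \<le> ereal t"
  proof (rule ccontr)
    assume "\<not> bb_f UU dbar mu p \<le> ereal t"
    then have "ereal t < bb_f UU dbar mu p" by auto
    then obtain r where r: "ereal t < ereal r" "ereal r < bb_f UU dbar mu p" using ereal_dense2 by blast
    define e where "e = (r - t)/2"
    have "t < r" using r by simp
    have e1: "e > 0" unfolding e_def using \<open>t < r\<close> by simp
    have e2: "t + e < r" unfolding e_def using \<open>t < r\<close> by (simp add: field_simps)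
    note e = e1 e2
    obtain N1 where N1: "\<forall>n\<ge>N1. dbar (x n) p < ereal (t+e)" using conv e by blast
    obtain N2 where N2: "\<forall>n\<ge>N2. \<bar>s n - t\<bar> < e" using s_near e by blast
    define n where "n = max N1 N2"
    have dn: "dbar (x n) p < ereal (t+e)" using N1 n_def by auto
    have "\<bar>s n - t\<bar> < e" using N2 n_def by auto
    then have "ereal (s n) < ereal (t+e)" by simp
    then have "bb_f UU dbar mu (x n) < ereal (t + e)" by (rule le_less_trans[OF bbx])
    then have pos: "0 < mu (oball UU dbar (x n) (t + e))" using posball xU by blast
    have sub: "oball UU dbar (x n) (t + e) \<subseteq> oball UU dbar p r"
    proof
      fix z assume z: "z \<in> oball UU dbar (x n) (t + e)"
      then have zU: "z \<in> UU" unfolding oball_def by auto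
      have "dbar p z \<le> max (dbar p (x n)) (dbar (x n) z)" using dbar_ultra pU xU zU by blast
      also have "\<dots> < ereal (t + e)" using dn z dbar_sym[of p "x n"] unfolding oball_def by auto
      also have "\<dots> < ereal r" using e by simp
      finally show "z \<in> oball UU dbar p r" using zU unfolding oball_def by auto
    qed
    have "mu (oball UU dbar (x n) (t + e)) \<le> mu (oball UU dbar p r)" using mu_mono[OF pU sub] .
    then have "0 < mu (oball UU dbar p r)" using pos by auto
    moreover have "r \<ge> 0" using r t_nonneg by auto
    ultimately have "bb_f UU dbar mu p \<le> ereal r" unfolding bb_f_def by (auto intro!: Inf_lower)
    then show False using r by auto
  qed
  show ?thesis using pU bb conv by blast
qed

end


lemma ereal_aux1: "a - ereal c < ereal d \<Longrightarrow> a < ereal (c + d)"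
  by (cases a) auto

lemma ereal_aux2: "a < ereal A \<Longrightarrow> a - ereal B < ereal (A - B)"
  by (cases a) auto

lemma real_tri:
  fixes a b c s t u :: real
  assumes "c \<le> max a b"
  shows "max (c - (s+u)/2) (\<bar>u - s\<bar>/2) \<le> max (a - (s+t)/2) (\<bar>t - s\<bar>/2) + max (b - (t+u)/2) (\<bar>u - t\<bar>/2)"
proof -
  define A where "A = max (a - (s+t)/2) (\<bar>t - s\<bar>/2)"
  define B where "B = max (b - (t+u)/2) (\<bar>u - t\<bar>/2)"
  have A: "a - (s+t)/2 \<le> A" "\<bar>t - s\<bar>/2 \<le> A" unfolding A_def by auto
  have B: "b - (t+u)/2 \<le> B" "\<bar>u - t\<bar>/2 \<le> B" unfolding B_def by auto
  have "\<bar>u - s\<bar> \<le> \<bar>t - s\<bar> + \<bar>u - t\<bar>" by arith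
  then have "\<bar>u - s\<bar>/2 \<le> \<bar>t - s\<bar>/2 + \<bar>u - t\<bar>/2" by simp
  also have "\<dots> \<le> A + B" using A(2) B(2) by (rule add_mono)
  finally have 1: "\<bar>u - s\<bar>/2 \<le> A + B" .
  have ab: "t - s \<le> \<bar>t - s\<bar>" "t - u \<le> \<bar>u - t\<bar>" by auto
  have 2: "c - (s+u)/2 \<le> A + B"
  proof (cases "a \<le> b")
    case True then have "c \<le> b" using assms by auto
    then show ?thesis using B(1) ab(1) A(2) by argo
  next
    case False then have "c \<le> a" using assms by auto
    then show ?thesis using A(1) ab(2) B(2) by argo
  qed
  show ?thesis using 1 2 unfolding A_def B_def by auto
qed

lemma dT_tri_aux:
  fixes a b c :: ereal and s t u :: real
  assumes a: "0 \<le> a" and b: "0 \<le> b" and c: "0 \<le> c" and cab: "c \<le> max a b"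
  shows "max (c - ereal ((s+u)/2)) (ereal (\<bar>u - s\<bar>/2)) \<le>
     max (a - ereal ((s+t)/2)) (ereal (\<bar>t - s\<bar>/2)) + max (b - ereal ((t+u)/2)) (ereal (\<bar>u - t\<bar>/2))"
proof (cases "a = \<infinity> \<or> b = \<infinity>")
  case True
  have h: "max (a - ereal ((s+t)/2)) (ereal (\<bar>t - s\<bar>/2)) + max (b - ereal ((t+u)/2)) (ereal (\<bar>u - t\<bar>/2)) = \<infinity>"
    using True a b by (cases a; cases b) auto
  show ?thesis by (subst h) simp
next
  case False
  obtain a' where a': "a = ereal a'" using False a by (cases a) auto
  obtain b' where b': "b = ereal b'" using False b by (cases b) auto
  obtain c' where c': "c = ereal c'" using c cab a' b' by (cases c) (auto simp: max_def split: if_splits)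
  have "c' \<le> max a' b'" using cab a' b' c' by (cases "a' \<le> b'") (auto simp: max_def)
  from real_tri[OF this, of s u t]
  have "ereal (max (c' - (s+u)/2) (\<bar>u - s\<bar>/2)) \<le> ereal (max (a' - (s+t)/2) (\<bar>t - s\<bar>/2)) + ereal (max (b' - (t+u)/2) (\<bar>u - t\<bar>/2))"
    by (simp del: ereal_max)
  then show ?thesis using a' b' c' by simp
qed

context comb begin

lemma complete: "complete_quotient_metric (backbone_reps UU dbar mu) (dT dbar)"
proof -
  let ?S = "backbone_reps UU dbar mu"
  have memS: "p \<in> ?S \<longleftrightarrow> fst p \<in> UU \<and> 0 \<le> snd p \<and> bb_f UU dbar mu (fst p) \<le> ereal (snd p)" for p
    unfolding backbone_reps_def by (cases p) auto
  have dTe: "dT dbar p q = max (dbar (fst p) (fst q) - ereal ((snd p + snd q)/2)) (ereal (\<bar>snd q - snd p\<bar>/2))" for p q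
    unfolding dT_def by simp
  have A1: "\<forall>p\<in>?S. dT dbar p p = 0"
  proof
    fix p assume "p \<in> ?S"
    then have "0 \<le> snd p" using memS by auto
    then show "dT dbar p p = 0" unfolding dTe by (simp add: max_def)
  qed
  have A2: "\<forall>p\<in>?S. \<forall>q\<in>?S. 0 \<le> dT dbar p q \<and> dT dbar p q = dT dbar q p"
    unfolding dTe by (auto simp: dbar_sym add.commute abs_minus_commute max.coboundedI2)
  have A3: "\<forall>p\<in>?S. \<forall>q\<in>?S. \<forall>r\<in>?S. dT dbar p r \<le> dT dbar p q + dT dbar q r"
  proof (intro ballI)
    fix p q r assume "p \<in> ?S" "q \<in> ?S" "r \<in> ?S"
    then have U: "fst p \<in> UU" "fst q \<in> UU" "fst r \<in> UU" using memS by auto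
    show "dT dbar p r \<le> dT dbar p q + dT dbar q r"
      unfolding dTe using dT_tri_aux[OF dbar_nonneg[OF U(1), of "fst q"] dbar_nonneg[OF U(2), of "fst r"] dbar_nonneg[OF U(1), of "fst r"] dbar_ultra[OF U]] .
  qed
  have A4: "\<exists>p\<in>?S. (\<lambda>n. dT dbar (\<sigma> n) p) \<longlonglongrightarrow> 0"
    if mem: "\<forall>n. \<sigma> n \<in> ?S" and cau: "\<forall>e>0. \<exists>N. \<forall>m\<ge>N. \<forall>n\<ge>N. dT dbar (\<sigma> m) (\<sigma> n) < ereal e" for \<sigma>
  proof -
    define x where "x n = fst (\<sigma> n)" for n
    define s where "s n = snd (\<sigma> n)" for n
    have xU: "x n \<in> UU" and s0: "0 \<le> s n" and bbx: "bb_f UU dbar mu (x n) \<le> ereal (s n)" for n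
      using mem memS unfolding x_def s_def by auto
    have dTs: "dT dbar (\<sigma> m) (\<sigma> n) = max (dbar (x m) (x n) - ereal ((s m + s n)/2)) (ereal (\<bar>s n - s m\<bar>/2))" for m n
      unfolding dTe x_def s_def ..
    have "Cauchy s"
    proof (rule metric_CauchyI)
      fix e :: real assume "0 < e"
      then have "e/2 > 0" by simp
      then obtain N where N: "\<forall>m\<ge>N. \<forall>n\<ge>N. dT dbar (\<sigma> m) (\<sigma> n) < ereal (e/2)" using cau by blast
      show "\<exists>M. \<forall>m\<ge>M. \<forall>n\<ge>M. dist (s m) (s n) < e"
      proof (intro exI allI impI)
        fix m n assume "N \<le> m" "N \<le> n"
        then have "ereal (\<bar>s n - s m\<bar>/2) < ereal (e/2)" using N dTs[of m n] by (metis max.strict_boundedE)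
        then show "dist (s m) (s n) < e" by (simp add: dist_real_def abs_minus_commute)
      qed
    qed
    then obtain t where st: "s \<longlonglongrightarrow> t" using Cauchy_convergent_iff convergent_def by blast
    have t0: "0 \<le> t" using LIMSEQ_le_const[OF st] s0 by blast
    have snear: "\<exists>N. \<forall>n\<ge>N. \<bar>s n - t\<bar> < e" if "e > 0" for e
      using LIMSEQ_D[OF st that] by (simp add: real_norm_def)
    have dcau: "\<exists>N. \<forall>m\<ge>N. \<forall>n\<ge>N. dbar (x m) (x n) < ereal (t + e)" if "e > 0" for e
    proof -
      have e2: "e/2 > 0" using that by simp
      obtain N1 where N1: "\<forall>m\<ge>N1. \<forall>n\<ge>N1. dT dbar (\<sigma> m) (\<sigma> n) < ereal (e/2)" using cau e2 by blast
      obtain N2 where N2: "\<forall>n\<ge>N2. \<bar>s n - t\<bar> < e/2" using snear e2 by blast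
      show ?thesis
      proof (intro exI allI impI)
        fix m n assume mn: "max N1 N2 \<le> m" "max N1 N2 \<le> n"
        have "dbar (x m) (x n) - ereal ((s m + s n)/2) < ereal (e/2)"
          using N1 mn dTs[of m n] by (metis max.bounded_iff max.strict_boundedE)
        then have d1: "dbar (x m) (x n) < ereal ((s m + s n)/2 + e/2)" by (rule ereal_aux1)
        have a1: "\<bar>s m - t\<bar> < e/2" and a2: "\<bar>s n - t\<bar> < e/2" using N2 mn by auto
        have "s m - t < e/2" using order.strict_trans1[OF abs_ge_self a1] .
        moreover have "s n - t < e/2" using order.strict_trans1[OF abs_ge_self a2] .
        ultimately have "s m < t + e/2" "s n < t + e/2" by linarith+
        then have "(s m + s n)/2 + e/2 < t + e" by argo
        then have "ereal ((s m + s n)/2 + e/2) < ereal (t + e)" by simp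
        with d1 show "dbar (x m) (x n) < ereal (t + e)" by (rule less_trans)
      qed
    qed
    interpret cseq f x s t
      by unfold_locales (use xU bbx st dcau t0 in auto)
    obtain p where p: "p \<in> UU" "bb_f UU dbar mu p \<le> ereal t"
      and conv: "\<forall>e>0. \<exists>N. \<forall>n\<ge>N. dbar (x n) p < ereal (t+e)" using limit_exists by blast
    have pS: "(p, t) \<in> ?S" using memS p t0 by auto
    have "(\<lambda>n. dT dbar (\<sigma> n) (p, t)) \<longlonglongrightarrow> 0"
    proof (rule order_tendstoI)
      fix a :: ereal assume "a < 0"
      moreover have "0 \<le> dT dbar (\<sigma> n) (p, t)" for n unfolding dTe by (simp add: max.coboundedI2)
      ultimately have "\<forall>n. a < dT dbar (\<sigma> n) (p, t)" by (metis less_le_trans)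
      then show "\<forall>\<^sub>F n in sequentially. a < dT dbar (\<sigma> n) (p, t)" by simp
    next
      fix b :: ereal assume "0 < b"
      then obtain e where e: "0 < ereal e" "ereal e < b" using ereal_dense2 by blast
      then have e0: "e > 0" by simp
      have e2: "e/2 > 0" using e0 by simp
      obtain N1 where N1: "\<forall>n\<ge>N1. dbar (x n) p < ereal (t+e/2)" using conv e2 by blast
      obtain N2 where N2: "\<forall>n\<ge>N2. \<bar>s n - t\<bar> < e/2" using snear e2 by blast
      have "dT dbar (\<sigma> n) (p, t) < b" if "n \<ge> max N1 N2" for n
      proof -
        have h1: "dbar (x n) p < ereal (t+e/2)" using N1 that by auto
        have h2: "\<bar>s n - t\<bar> < e/2" using N2 that by auto
        have "dbar (x n) p - ereal ((s n + t)/2) < ereal (t + e/2 - (s n + t)/2)"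
          by (rule ereal_aux2[OF h1])
        also have "t + e/2 - (s n + t)/2 < e"
        proof -
          have h3: "-(s n - t) < e/2" using order.strict_trans1[OF abs_ge_minus_self h2] .
          then show ?thesis using e0 by argo
        qed
        finally have c1: "dbar (x n) p - ereal ((s n + t)/2) < ereal e" by simp
        have "\<bar>t - s n\<bar> < e/2" using h2 by (simp add: abs_minus_commute)
        then have "\<bar>t - s n\<bar>/2 < e" using e0 by argo
        then have c2: "ereal (\<bar>t - s n\<bar>/2) < ereal e" by simp
        have "dT dbar (\<sigma> n) (p, t) = max (dbar (x n) p - ereal ((s n + t)/2)) (ereal (\<bar>t - s n\<bar>/2))"
          unfolding dTe x_def s_def by simp
        also have "\<dots> < ereal e" using c1 c2 by simp
        finally show ?thesis using e by simp
      qed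
      then show "\<forall>\<^sub>F n in sequentially. dT dbar (\<sigma> n) (p, t) < b"
        unfolding eventually_sequentially by blast
    qed
    then show ?thesis using pS by blast
  qed
  show ?thesis unfolding complete_quotient_metric_def using A1 A2 A3 A4 by blast
qed

end


lemma fI_nonneg: "0 \<le> fI I x"
  unfolding fI_def by (rule Inf_greatest) auto

lemma fI_zero: "z \<in> I 0 \<Longrightarrow> fI I z = 0"
proof -
  assume "z \<in> I 0"
  then have "fI I z \<le> ereal 0" unfolding fI_def by (intro Inf_lower) auto
  then show ?thesis using fI_nonneg[of I z] by (simp add: zero_ereal_def)
qed

theorem mainTheorem17:
  fixes I :: "real \<Rightarrow> real set"
  assumes "nested_interval_partition I"
  shows "\<exists>(F :: real set) (dbar :: real \<Rightarrow> real \<Rightarrow> ereal).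
           countable F \<and> F \<inter> {0..1} = {} \<and>
           pseudo_ultrametric_on ({0..1} \<union> F) dbar \<and>
           (\<forall>x\<in>{0..1}. \<forall>y\<in>{0..1}. dbar x y = dI I x y) \<and>
           (let U = {0..1} \<union> F;
                \<mu> = (\<lambda>B. emeasure lborel (B \<inter> {0..1}))
            in (\<forall>x\<in>U. \<forall>t. oball U dbar x t \<inter> {0..1} \<in> scrI I) \<and>
               complete_quotient_metric (backbone_reps U dbar \<mu>) (dT dbar))"
proof -
  interpret comb "fI I" by unfold_locales (rule fI_nonneg)
  have I0: "I 0 \<subseteq> {0<..<1}" "open (I 0)" using assms unfolding nested_interval_partition_def by auto
  have U: "{0..1} \<union> FF = UU" unfolding UU_def ..
  have mu: "(\<lambda>B. emeasure lborel (B \<inter> {0..1})) = mu" by (rule ext) (simp add: mu_def)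
  have pu: "pseudo_ultrametric_on UU dbar"
    unfolding pseudo_ultrametric_on_def using dbar_nonneg dbar_sym dbar_ultra by auto
  have agree: "\<forall>x\<in>{0..1}. \<forall>y\<in>{0..1}. dbar x y = dI I x y"
    using dbar_real unfolding dI_def by auto
  have balls: "\<forall>x\<in>UU. \<forall>t. oball UU dbar x t \<inter> {0..1} \<in> scrI I"
  proof (intro ballI allI)
    fix x t assume x: "x \<in> UU"
    define B where "B = oball UU dbar x t \<inter> {0..1}"
    define A where "A = B - I 0"
    define M where "M = {C \<in> components (I 0). C \<subseteq> B}"
    have Bb: "B \<in> sets borel" unfolding B_def using ball_borel[OF x] .
    have Ab: "A \<in> sets borel" unfolding A_def using Bb I0(2) by auto
    have As: "A \<subseteq> {0..1} - I 0" unfolding A_def B_def by auto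
    have Ms: "M \<subseteq> components (I 0)" unfolding M_def by auto
    have "B = A \<union> \<Union>M"
    proof
      show "A \<union> \<Union>M \<subseteq> B" unfolding A_def M_def by auto
      show "B \<subseteq> A \<union> \<Union>M"
      proof
        fix y assume yB: "y \<in> B"
        show "y \<in> A \<union> \<Union>M"
        proof (cases "y \<in> I 0")
          case False then show ?thesis using yB unfolding A_def by auto
        next
          case True
          define C where "C = connected_component_set (I 0) y"
          have Cc: "C \<in> components (I 0)" unfolding C_def using True by (rule componentsI)
          have yC: "y \<in> C" unfolding C_def using True by auto
          have CI: "C \<subseteq> I 0" unfolding C_def by (rule connected_component_subset)
          have Cint: "is_interval C" unfolding C_def is_interval_connected_1 by (rule connected_connected_component)
          have "C \<subseteq> B"
          proof
            fix z assume zC: "z \<in> C"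
            have z01: "z \<in> {0..1}" "y \<in> {0..1}" using zC yC CI I0(1) by auto
            have seg: "{min y z..max y z} \<subseteq> I 0"
            proof
              fix w assume "w \<in> {min y z..max y z}"
              then have w: "min y z \<le> w" "w \<le> max y z" by auto
              have ivC: "\<forall>a\<in>C. \<forall>b\<in>C. \<forall>x. a \<le> x \<and> x \<le> b \<longrightarrow> x \<in> C"
                using Cint unfolding is_interval_1 .
              have "w \<in> C"
              proof (cases "y \<le> z")
                case True
                then have "y \<le> w" "w \<le> z" using w by (auto simp: min_def max_def)
                then show ?thesis using ivC yC zC by blast
              next
                case False
                then have "z \<le> w" "w \<le> y" using w by (auto simp: min_def max_def)
                then show ?thesis using ivC yC zC by blast
              qed
              then show "w \<in> I 0" using CI by auto
            qed
            have "dbar y z = 0"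
            proof (cases "y = z")
              case False
              have h0: "\<And>w. w \<in> {min y z..max y z} \<Longrightarrow> fI I w = 0" using seg fI_zero by blast
              have ne: "{min y z..max y z} \<noteq> {}" by simp
              have "(SUP w\<in>{min y z..max y z}. fI I w) = (SUP w\<in>{min y z..max y z}. 0)"
                by (rule SUP_cong) (auto simp: h0)
              also have "\<dots> = 0" using ne by (rule SUP_const)
              finally show ?thesis using dbar_real[OF z01(2,1)] False by simp
            qed simp
            have yU: "y \<in> UU" "z \<in> UU" using z01 UU01 by auto
            have "dbar x z \<le> max (dbar x y) (dbar y z)" using dbar_ultra x yU by blast
            also have "\<dots> = max (dbar x y) 0" using \<open>dbar y z = 0\<close> by simp
            also have "\<dots> < ereal t"
            proof -
              have "dbar x y < ereal t" using yB unfolding B_def oball_def by auto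
              moreover have "0 \<le> dbar x y" using dbar_nonneg x by blast
              ultimately show ?thesis by auto
            qed
            finally show "z \<in> B" unfolding B_def oball_def using yU z01 by auto
          qed
          then have "C \<in> M" using Cc unfolding M_def by auto
          then show ?thesis using yC by auto
        qed
      qed
    qed
    then have "\<exists>A' M'. B = A' \<union> \<Union>M' \<and> A' \<in> sets borel \<and> A' \<subseteq> {0..1} - I 0 \<and> M' \<subseteq> components (I 0)"
      using Ab As Ms by (intro exI[of _ A] exI[of _ M] conjI)
    then show "oball UU dbar x t \<inter> {0..1} \<in> scrI I"
      unfolding scrI_def B_def[symmetric] by simp
  qed
  have last: "let U = {0..1} \<union> FF; \<mu> = (\<lambda>B. emeasure lborel (B \<inter> {0..1}))
            in (\<forall>x\<in>U. \<forall>t. oball U dbar x t \<inter> {0..1} \<in> scrI I) \<and>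
               complete_quotient_metric (backbone_reps U dbar \<mu>) (dT dbar)"
    unfolding Let_def U mu using balls complete by (rule conjI)
  have pu': "pseudo_ultrametric_on ({0..1} \<union> FF) dbar" unfolding U by (rule pu)
  show ?thesis
    by (rule exI[of _ FF], rule exI[of _ dbar], intro conjI countable_FF FF_disj pu' agree last)
qed


end
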